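(* Let $\mathfrak g = \bigoplus_i \mathfrak I_i$ be a decomposition of $\mathfrak g$ into ideals which are pairwise orthogonal for an $\mathrm{Ad}_G$-invariant nondegenerate symmetric bilinear form on $\mathfrak g$, let $\mathfrak t_i = \mathfrak t\cap\mathfrak I_i$, $\Phi_{\mathfrak I_i}$ the root system of $(\mathfrak I_i,\mathfrak t_i)$ (so that $\mathfrak t = \bigoplus_i \mathfrak t_i$, $\Phi_{\mathfrak g} = \bigsqcup_i \Phi_{\mathfrak I_i}$, and $W_{\mathfrak g} = \prod_i W_{\mathfrak I_i}$ with $W_{\mathfrak I_i} = W(\Phi_{\mathfrak I_i})$ acting on $\mathfrak t_i$ and trivially on the other summands). Let $\Phi\subseteq \Phi_{\mathfrak g}$ be a root subsystem, $\Phi^{(i)} = \Phi\cap\Phi_{\mathfrak I_i}$, $$\mathbf B = \bigcap_{\alpha\in\Phi}\ker(\alpha)\cap\bigcap_{\alpha\in\Phi_{\mathfrak g}\setminus\Phi}(\mathfrak t\setminus\ker\alpha),\qquad \mathbf B_i = \bigcap_{\alpha\in\Phi^{(i)}}\ker(\alpha)\cap\bigcap_{\alpha\in\Phi_{\mathfrak I_i}\setminus\Phi^{(i)}}(\mathfrak t_i\setminus\ker\alpha)\subseteq\mathfrak t_i .$$ Let $\overline{\mathbf B}$ be the topological quotient of $\mathbf B$ by the relation $X\sim Y$ iff $W_{\mathfrak g}X = W_{\mathfrak g}Y$, and $\overline{\mathbf B}_i$ the topological quotient of $\mathbf B_i$ by the relation $X\sim Y$ iff $W_{\mathfrak I_i}X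 = W_{\mathfrak I_i}Y$. Then $\overline{\mathbf B}$ is homeomorphic to the product $\prod_i\overline{\mathbf B}_i$.
   Context: $G$ is a connected complex reductive Lie group, $\mathfrak g = \mathrm{Lie}(G)$, $T\subseteq G$ a maximal torus, $\mathfrak t = \mathrm{Lie}(T)$, $\Phi_{\mathfrak g}$ the root system of $(\mathfrak g,\mathfrak t)$, $W_{\mathfrak g}$ the Weyl group acting on $\mathfrak t$. Roots of $\Phi_{\mathfrak I_i}$ are regarded as elements of $\mathfrak t^\vee$ vanishing on $\mathfrak t_j$ for $j\ne i$. Empty intersections of kernels are the whole ambient space. *)

theory Defs
  imports "HOL-Analysis.Analysis"
begin

text \<open>The Cartan subalgebra t is modelled as
  the finite-dimensional complex vector space complex^'n (with its Euclidean topology);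
  roots are complex-linear functionals t -> complex; each root alpha has a coroot
  cor alpha in t with alpha (cor alpha) = 2; the reflection s_alpha acts on t by
  X |-> X - alpha(X) cor(alpha).\<close>

definition clinear_fun :: "(complex^'n \<Rightarrow> complex) \<Rightarrow> bool" where
  "clinear_fun a \<longleftrightarrow> (\<forall>x y. a (x + y) = a x + a y) \<and> (\<forall>c x. a (c *s x) = c * a x)"

definition csubspace_vec :: "(complex^'n) set \<Rightarrow> bool" where
  "csubspace_vec S \<longleftrightarrow> 0 \<in> S \<and> (\<forall>x\<in>S. \<forall>y\<in>S. x + y \<in> S) \<and> (\<forall>c. \<forall>x\<in>S. c *s x \<in> S)"

definition internal_direct_sum :: "'i set \<Rightarrow> ('i \<Rightarrow> (complex^'n) set) \<Rightarrow> bool" where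
  "internal_direct_sum I T \<longleftrightarrow> finite I \<and> (\<forall>i\<in>I. csubspace_vec (T i)) \<and>
     (\<forall>x. \<exists>!y. y \<in> (\<Pi>\<^sub>E i\<in>I. T i) \<and> x = (\<Sum>i\<in>I. y i))"

definition refl :: "((complex^'n \<Rightarrow> complex) \<Rightarrow> complex^'n) \<Rightarrow> (complex^'n \<Rightarrow> complex)
    \<Rightarrow> complex^'n \<Rightarrow> complex^'n" where
  "refl cor a X = X - a X *s cor a"

definition drefl :: "((complex^'n \<Rightarrow> complex) \<Rightarrow> complex^'n) \<Rightarrow> (complex^'n \<Rightarrow> complex)
    \<Rightarrow> (complex^'n \<Rightarrow> complex) \<Rightarrow> (complex^'n \<Rightarrow> complex)" where
  "drefl cor a b = (\<lambda>x. b x - b (cor a) * a x)"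

definition root_system_in :: "(complex^'n) set \<Rightarrow> (complex^'n \<Rightarrow> complex) set
    \<Rightarrow> ((complex^'n \<Rightarrow> complex) \<Rightarrow> complex^'n) \<Rightarrow> bool" where
  "root_system_in V \<Phi> cor \<longleftrightarrow> finite \<Phi> \<and>
     (\<forall>a\<in>\<Phi>. clinear_fun a \<and> cor a \<in> V \<and> a (cor a) = 2 \<and>
        (\<forall>b\<in>\<Phi>. b (cor a) \<in> \<int> \<and> drefl cor a b \<in> \<Phi>))"

inductive_set weyl_group :: "((complex^'n \<Rightarrow> complex) \<Rightarrow> complex^'n) \<Rightarrow> (complex^'n \<Rightarrow> complex) set
    \<Rightarrow> (complex^'n \<Rightarrow> complex^'n) set"
  for cor \<Phi> where
  weyl_id: "id \<in> weyl_group cor \<Phi>"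
| weyl_step: "a \<in> \<Phi> \<Longrightarrow> w \<in> weyl_group cor \<Phi> \<Longrightarrow> refl cor a \<circ> w \<in> weyl_group cor \<Phi>"

definition root_subsystem :: "((complex^'n \<Rightarrow> complex) \<Rightarrow> complex^'n) \<Rightarrow> (complex^'n \<Rightarrow> complex) set
    \<Rightarrow> (complex^'n \<Rightarrow> complex) set \<Rightarrow> bool" where
  "root_subsystem cor \<Phi> \<Phi>g \<longleftrightarrow> \<Phi> \<subseteq> \<Phi>g \<and> (\<forall>a\<in>\<Phi>. \<forall>b\<in>\<Phi>. drefl cor a b \<in> \<Phi>)"

definition stratum :: "(complex^'n) set \<Rightarrow> (complex^'n \<Rightarrow> complex) set \<Rightarrow> (complex^'n \<Rightarrow> complex) set
    \<Rightarrow> (complex^'n) set" where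
  "stratum V \<Phi>all \<Phi> = {X \<in> V. (\<forall>a\<in>\<Phi>. a X = 0) \<and> (\<forall>a\<in>\<Phi>all - \<Phi>. a X \<noteq> 0)}"

definition orbit_rel :: "('a \<Rightarrow> 'a) set \<Rightarrow> 'a set \<Rightarrow> ('a \<times> 'a) set" where
  "orbit_rel W S = {(X, Y). X \<in> S \<and> Y \<in> S \<and> (\<lambda>w. w X) ` W = (\<lambda>w. w Y) ` W}"

definition quot_topology :: "'a topology \<Rightarrow> ('a \<times> 'a) set \<Rightarrow> 'a set topology" where
  "quot_topology X R = topology (\<lambda>U. U \<subseteq> topspace X // R \<and> openin X (\<Union>U))"

end

theory Submission
  imports Defs
begin

lemma scaleR_vec_of_real: "(r::real) *\<^sub>R (x::complex^'n) = (complex_of_real r) *s x"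
  apply (rule iffD2[OF vec_eq_iff], rule allI)
  apply (simp only: vector_scaleR_component vector_smult_component)
  apply (simp add: scaleR_conv_of_real)
  done

lemma clinear_diff: "clinear_fun a \<Longrightarrow> a (x - y) = a x - a y"
proof -
  assume h: "clinear_fun a"
  have "a x = a ((x - y) + y)" by simp
  also have "\<dots> = a (x - y) + a y" using h unfolding clinear_fun_def by blast
  finally show ?thesis by simp
qed

lemma clinear_scale: "clinear_fun a \<Longrightarrow> a (c *s x) = c * a x"
  unfolding clinear_fun_def by blast

lemma clinear_add: "clinear_fun a \<Longrightarrow> a (x + y) = a x + a y"
  unfolding clinear_fun_def by blast

lemma clinear_zero: "clinear_fun a \<Longrightarrow> a 0 = 0"
  using clinear_diff[of a 0 0] by simp

lemma clinear_sum: "clinear_fun a \<Longrightarrow> a (sum f J) = (\<Sum>j\<in>J. a (f j))"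
  by (induction J rule: infinite_finite_induct) (auto simp: clinear_zero clinear_add)

lemma clinear_linear: "clinear_fun a \<Longrightarrow> linear a"
  by (rule linearI) (auto simp: clinear_add scaleR_vec_of_real clinear_scale scaleR_conv_of_real)

lemma clinear_cont: "clinear_fun a \<Longrightarrow> continuous_on S a"
  using clinear_linear[of a] linear_conv_bounded_linear[of a] linear_continuous_on[of a S] by blast

lemma refl_linear: "clinear_fun a \<Longrightarrow> linear (refl cor a)"
  unfolding refl_def
  by (rule linearI) (auto simp: clinear_add scaleR_vec_of_real clinear_scale vector_sadd_rdistrib
      vector_smult_assoc vector_ssub_ldistrib)

lemma refl_refl: "clinear_fun a \<Longrightarrow> a (cor a) = 2 \<Longrightarrow> refl cor a (refl cor a x) = x"
  unfolding refl_def by (simp add: clinear_diff clinear_scale vec_eq_iff algebra_simps)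

lemma comp_refl: "clinear_fun b \<Longrightarrow> b \<circ> refl cor a = drefl cor a b"
  unfolding refl_def drefl_def by (auto simp: clinear_diff clinear_scale mult.commute)

definition good :: "((complex^'n \<Rightarrow> complex) \<Rightarrow> complex^'n) \<Rightarrow> (complex^'n \<Rightarrow> complex) set \<Rightarrow> bool" where
  "good cor \<Psi> \<longleftrightarrow> (\<forall>a\<in>\<Psi>. clinear_fun a \<and> a (cor a) = 2)"

lemma weyl_comp: "u \<in> weyl_group cor \<Psi> \<Longrightarrow> v \<in> weyl_group cor \<Psi> \<Longrightarrow> u \<circ> v \<in> weyl_group cor \<Psi>"
  by (induction u rule: weyl_group.induct) (auto simp: comp_assoc intro: weyl_group.intros)

lemma weyl_refl: "a \<in> \<Psi> \<Longrightarrow> refl cor a \<in> weyl_group cor \<Psi>"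
  using weyl_step[OF _ weyl_id, of a \<Psi> cor] by simp

lemma weyl_inv: "w \<in> weyl_group cor \<Psi> \<Longrightarrow> good cor \<Psi> \<Longrightarrow>
   \<exists>w'\<in>weyl_group cor \<Psi>. \<forall>x. w' (w x) = x"
proof (induction w rule: weyl_group.induct)
  case weyl_id
  then show ?case using weyl_group.weyl_id[of cor \<Psi>] by (intro bexI[of _ id]) auto
next
  case (weyl_step a w)
  then obtain w' where w': "w' \<in> weyl_group cor \<Psi>" "\<forall>x. w' (w x) = x" by blast
  have "w' \<circ> refl cor a \<in> weyl_group cor \<Psi>" using weyl_comp[OF w'(1) weyl_refl[OF weyl_step(1)]] .
  moreover have "\<forall>x. (w' \<circ> refl cor a) ((refl cor a \<circ> w) x) = x"
  proof -
    have "\<And>x. refl cor a (refl cor a x) = x"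
      using weyl_step(1,4) unfolding good_def by (intro refl_refl) auto
    then show ?thesis using w'(2) by simp
  qed
  ultimately show ?case by blast
qed

lemma weyl_orbit: "good cor \<Psi> \<Longrightarrow>
  ((\<lambda>w. w X) ` weyl_group cor \<Psi> = (\<lambda>w. w Y) ` weyl_group cor \<Psi>) \<longleftrightarrow> (\<exists>w\<in>weyl_group cor \<Psi>. Y = w X)"
proof
  assume "(\<lambda>w. w X) ` weyl_group cor \<Psi> = (\<lambda>w. w Y) ` weyl_group cor \<Psi>"
  moreover have "Y \<in> (\<lambda>w. w Y) ` weyl_group cor \<Psi>" using weyl_id[of cor \<Psi>] by (intro image_eqI[of _ _ id]) auto
  ultimately show "\<exists>w\<in>weyl_group cor \<Psi>. Y = w X" by auto
next
  assume g: "good cor \<Psi>" and "\<exists>w\<in>weyl_group cor \<Psi>. Y = w X"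
  then obtain w where w: "w \<in> weyl_group cor \<Psi>" "Y = w X" by blast
  obtain w' where w': "w' \<in> weyl_group cor \<Psi>" "\<forall>x. w' (w x) = x" using weyl_inv[OF w(1) g] by blast
  show "(\<lambda>w. w X) ` weyl_group cor \<Psi> = (\<lambda>w. w Y) ` weyl_group cor \<Psi>"
  proof
    show "(\<lambda>w. w X) ` weyl_group cor \<Psi> \<subseteq> (\<lambda>w. w Y) ` weyl_group cor \<Psi>"
    proof
      fix z assume "z \<in> (\<lambda>w. w X) ` weyl_group cor \<Psi>"
      then obtain u where u: "u \<in> weyl_group cor \<Psi>" "z = u X" by blast
      have "z = (u \<circ> w') Y" using u w w' by simp
      then show "z \<in> (\<lambda>w. w Y) ` weyl_group cor \<Psi>" using weyl_comp[OF u(1) w'(1)] by blast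
    qed
    show "(\<lambda>w. w Y) ` weyl_group cor \<Psi> \<subseteq> (\<lambda>w. w X) ` weyl_group cor \<Psi>"
    proof
      fix z assume "z \<in> (\<lambda>w. w Y) ` weyl_group cor \<Psi>"
      then obtain u where u: "u \<in> weyl_group cor \<Psi>" "z = u Y" by blast
      have "z = (u \<circ> w) X" using u w by simp
      then show "z \<in> (\<lambda>w. w X) ` weyl_group cor \<Psi>" using weyl_comp[OF u(1) w(1)] by blast
    qed
  qed
qed

lemma weyl_linear: "w \<in> weyl_group cor \<Psi> \<Longrightarrow> good cor \<Psi> \<Longrightarrow> linear w"
  by (induction w rule: weyl_group.induct)
    (auto simp: good_def linear_id intro: linear_compose refl_linear)

lemma weyl_cont: "w \<in> weyl_group cor \<Psi> \<Longrightarrow> good cor \<Psi> \<Longrightarrow> continuous_on S w"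
  using weyl_linear[of w cor \<Psi>] linear_conv_bounded_linear[of w] linear_continuous_on[of w S] by blast

lemma weyl_dual: "w \<in> weyl_group cor \<Psi> \<Longrightarrow> good cor \<Psi> \<Longrightarrow>
   (\<forall>a\<in>\<Psi>. \<forall>b\<in>\<Psi>. drefl cor a b \<in> \<Psi>) \<Longrightarrow> b \<in> \<Psi> \<Longrightarrow> b \<circ> w \<in> \<Psi>"
proof (induction w arbitrary: b rule: weyl_group.induct)
  case weyl_id
  then show ?case by simp
next
  case (weyl_step a w)
  have "b \<circ> (refl cor a \<circ> w) = (b \<circ> refl cor a) \<circ> w" by (simp add: comp_assoc)
  also have "b \<circ> refl cor a = drefl cor a b" using weyl_step comp_refl unfolding good_def by blast
  finally show ?case using weyl_step by auto
qed

lemma orbit_rel_equiv: "equiv S (orbit_rel W S)"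
  unfolding equiv_def refl_on_def sym_def trans_def orbit_rel_def by auto

lemma weyl_sub: "w \<in> weyl_group cor \<Psi> \<Longrightarrow> \<Psi> \<subseteq> \<Psi>' \<Longrightarrow> w \<in> weyl_group cor \<Psi>'"
  by (induction w rule: weyl_group.induct) (auto intro: weyl_group.intros)

lemma quot_istopology:
  assumes "equiv (topspace X) R"
  shows "istopology (\<lambda>U. U \<subseteq> topspace X // R \<and> openin X (\<Union>U))"
  unfolding istopology_def
proof (rule conjI; intro allI impI)
  fix S T assume S: "S \<subseteq> topspace X // R \<and> openin X (\<Union>S)" and T: "T \<subseteq> topspace X // R \<and> openin X (\<Union>T)"
  have "\<Union>S \<inter> \<Union>T \<subseteq> \<Union>(S \<inter> T)"
    proof
      fix x assume "x \<in> \<Union>S \<inter> \<Union>T"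
      then obtain A B where AB: "A \<in> S" "B \<in> T" "x \<in> A" "x \<in> B" by blast
      then have "A = B" using quotient_disj[OF assms, of A B] S T by blast
      then show "x \<in> \<Union>(S \<inter> T)" using AB by blast
    qed
  then have "\<Union>(S \<inter> T) = \<Union>S \<inter> \<Union>T" by blast
  then show "S \<inter> T \<subseteq> topspace X // R \<and> openin X (\<Union>(S \<inter> T))" using S T by auto
next
  fix K assume K: "\<forall>S\<in>K. S \<subseteq> topspace X // R \<and> openin X (\<Union>S)"
  have "\<Union>(\<Union>K) = \<Union>(Union ` K)" by blast
  moreover have "openin X (\<Union>(Union ` K))" using K by (intro openin_Union) auto
  ultimately show "\<Union>K \<subseteq> topspace X // R \<and> openin X (\<Union>(\<Union>K))" using K by auto
qed

lemma openin_quot: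
  assumes "equiv (topspace X) R"
  shows "openin (quot_topology X R) U \<longleftrightarrow> U \<subseteq> topspace X // R \<and> openin X (\<Union>U)"
  unfolding quot_topology_def using topology_inverse'[OF quot_istopology[OF assms]] by simp

lemma topspace_quot:
  assumes "equiv (topspace X) R"
  shows "topspace (quot_topology X R) = topspace X // R"
proof -
  have "openin (quot_topology X R) (topspace X // R)"
    using openin_quot[OF assms] Union_quotient[OF assms] by auto
  then have "topspace X // R \<subseteq> topspace (quot_topology X R)" by (rule openin_subset)
  moreover have "topspace (quot_topology X R) \<subseteq> topspace X // R"
    using openin_quot[OF assms] openin_topspace by blast
  ultimately show ?thesis by blast
qed

lemma quot_cont:
  assumes e: "equiv (topspace X) R"
  shows "continuous_map X (quot_topology X R) (\<lambda>x. R``{x})"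
  unfolding continuous_map_def
proof (intro conjI allI impI)
  show "(\<lambda>x. R``{x}) \<in> topspace X \<rightarrow> topspace (quot_topology X R)"
    by (auto simp: topspace_quot[OF e] quotientI)
  fix U assume U: "openin (quot_topology X R) U"
  then have U': "U \<subseteq> topspace X // R" "openin X (\<Union>U)" using openin_quot[OF e] by auto
  have "{x \<in> topspace X. R `` {x} \<in> U} = \<Union>U"
  proof
    show "{x \<in> topspace X. R `` {x} \<in> U} \<subseteq> \<Union>U"
      using e by (auto simp: equiv_def refl_on_def)
    show "\<Union>U \<subseteq> {x \<in> topspace X. R `` {x} \<in> U}"
    proof
      fix x assume "x \<in> \<Union>U"
      then obtain C where C: "C \<in> U" "x \<in> C" by blast
      then obtain y where y: "y \<in> topspace X" "C = R``{y}" using U'(1) by (auto elim!: quotientE)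
      then have "R``{x} = C" using C e by (metis equiv_class_eq_iff Image_singleton_iff)
      then show "x \<in> {x \<in> topspace X. R `` {x} \<in> U}" using C y e
        by (metis (mono_tags, lifting) Image_singleton_iff equiv_class_eq_iff mem_Collect_eq)
    qed
  qed
  then show "openin X {x \<in> topspace X. R `` {x} \<in> U}" using U' by simp
qed

lemma quot_open:
  assumes e: "equiv (topspace X) R"
    and sat: "\<And>V. openin X V \<Longrightarrow> openin X {y. \<exists>x\<in>V. (x, y) \<in> R}"
    and V: "openin X V"
  shows "openin (quot_topology X R) ((\<lambda>x. R``{x}) ` V)"
proof -
  have sub: "V \<subseteq> topspace X" using openin_subset[OF V] .
  have "\<Union>((\<lambda>x. R``{x}) ` V) = {y. \<exists>x\<in>V. (x, y) \<in> R}" by auto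
  moreover have "(\<lambda>x. R``{x}) ` V \<subseteq> topspace X // R" using sub by (auto simp: quotientI)
  ultimately show ?thesis using openin_quot[OF e] sat[OF V] by simp
qed

lemma quot_homeo:
  assumes e: "equiv (topspace X) R"
    and cont: "continuous_map X Y g"
    and surj: "g ` topspace X = topspace Y"
    and opn: "\<And>U. openin X U \<Longrightarrow> openin Y (g ` U)"
    and fib: "\<And>x y. x \<in> topspace X \<Longrightarrow> y \<in> topspace X \<Longrightarrow> g x = g y \<longleftrightarrow> (x, y) \<in> R"
  shows "quot_topology X R homeomorphic_space Y"
proof -
  define f where "f C = g (SOME x. x \<in> C)" for C
  define h where "h y = {x \<in> topspace X. g x = y}" for y
  have R_sub: "R \<subseteq> topspace X \<times> topspace X" using e by (simp add: equiv_def refl_on_def)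
  have cls: "C = R``{x}" if "C \<in> topspace X // R" "x \<in> C" for C x
    using that e by (metis equiv_class_eq_iff Image_singleton_iff quotientE)
  have cls2: "R``{x} = {y \<in> topspace X. g y = g x}" if "x \<in> topspace X" for x
  proof -
    have symR: "(a, b) \<in> R \<Longrightarrow> (b, a) \<in> R" for a b using e by (meson equiv_def symD)
    show ?thesis using that fib R_sub symR by auto
  qed
  have fC: "f C = g x" if "C \<in> topspace X // R" "x \<in> C" for C x
  proof -
    have "(SOME x. x \<in> C) \<in> C" using that by (meson someI)
    then show ?thesis unfolding f_def using cls[OF that] cls2 that
      by (metis (mono_tags, lifting) quotientE mem_Collect_eq)
  qed
  have hom: "homeomorphic_maps (quot_topology X R) Y f h"
    unfolding homeomorphic_maps_def
  proof (intro conjI ballI)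
    show "continuous_map (quot_topology X R) Y f"
      unfolding continuous_map_def
    proof (intro conjI allI impI)
      show "f \<in> topspace (quot_topology X R) \<rightarrow> topspace Y"
      proof
        fix C assume "C \<in> topspace (quot_topology X R)"
        then have C: "C \<in> topspace X // R" by (simp add: topspace_quot[OF e])
        then obtain x where x: "x \<in> topspace X" "C = R``{x}" by (auto elim: quotientE)
        then have "x \<in> C" using e by (simp add: equiv_def refl_on_def)
        then show "f C \<in> topspace Y" using fC[OF C] x surj by blast
      qed
      fix V assume V: "openin Y V"
      let ?P = "{C \<in> topspace (quot_topology X R). f C \<in> V}"
      have "\<Union>?P = {x \<in> topspace X. g x \<in> V}"
      proof
        show "\<Union>?P \<subseteq> {x \<in> topspace X. g x \<in> V}"
          using fC by (auto simp: topspace_quot[OF e]) (use Union_quotient[OF e] in blast)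
        show "{x \<in> topspace X. g x \<in> V} \<subseteq> \<Union>?P"
        proof
          fix x assume x: "x \<in> {x \<in> topspace X. g x \<in> V}"
          have C: "R``{x} \<in> topspace X // R" using x by (auto intro: quotientI)
          have "x \<in> R``{x}" using x e by (auto simp: equiv_def refl_on_def)
          then show "x \<in> \<Union>?P" using fC[OF C] C x by (auto simp: topspace_quot[OF e])
        qed
      qed
      then show "openin (quot_topology X R) ?P"
        using openin_continuous_map_preimage[OF cont V]
        by (auto simp: openin_quot[OF e] topspace_quot[OF e])
    qed
    show "continuous_map Y (quot_topology X R) h"
      unfolding continuous_map_def
    proof (intro conjI allI impI)
      show "h \<in> topspace Y \<rightarrow> topspace (quot_topology X R)"
      proof
        fix y assume "y \<in> topspace Y"
        then obtain x where x: "x \<in> topspace X" "y = g x" using surj by blast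
        then have "h y = R``{x}" using cls2 unfolding h_def by simp
        then show "h y \<in> topspace (quot_topology X R)" using x by (auto simp: topspace_quot[OF e] quotientI)
      qed
      fix U assume U: "openin (quot_topology X R) U"
      then have U': "U \<subseteq> topspace X // R" "openin X (\<Union>U)" using openin_quot[OF e] by auto
      have "{y \<in> topspace Y. h y \<in> U} = g ` \<Union>U"
      proof
        show "{y \<in> topspace Y. h y \<in> U} \<subseteq> g ` \<Union>U"
        proof
          fix y assume y: "y \<in> {y \<in> topspace Y. h y \<in> U}"
          then obtain x where x: "x \<in> topspace X" "y = g x" using surj by blast
          then have "x \<in> h y" unfolding h_def by simp
          then show "y \<in> g ` \<Union>U" using y x by blast
        qed
        show "g ` \<Union>U \<subseteq> {y \<in> topspace Y. h y \<in> U}"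
        proof
          fix y assume "y \<in> g ` \<Union>U"
          then obtain x C where xC: "C \<in> U" "x \<in> C" "y = g x" by blast
          have xX: "x \<in> topspace X" using xC U'(1) Union_quotient[OF e] by blast
          have "h y = R``{x}" using cls2[OF xX] xC unfolding h_def by simp
          also have "\<dots> = C" using cls[of C x] xC U'(1) by auto
          finally show "y \<in> {y \<in> topspace Y. h y \<in> U}" using xC xX surj by blast
        qed
      qed
      then show "openin Y {y \<in> topspace Y. h y \<in> U}" using opn[OF U'(2)] by simp
    qed
    fix C assume "C \<in> topspace (quot_topology X R)"
    then have C: "C \<in> topspace X // R" by (simp add: topspace_quot[OF e])
    then obtain x where x: "x \<in> topspace X" "C = R``{x}" by (auto elim: quotientE)
    then have "x \<in> C" using e by (simp add: equiv_def refl_on_def)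
    then show "h (f C) = C" using fC[OF C] x cls2 unfolding h_def by simp
  next
    fix y assume "y \<in> topspace Y"
    then obtain x where x: "x \<in> topspace X" "y = g x" using surj by blast
    have C: "R``{x} \<in> topspace X // R" using x by (auto intro: quotientI)
    have "h y = R``{x}" using cls2[OF x(1)] x unfolding h_def by simp
    moreover have "x \<in> R``{x}" using x e by (auto simp: equiv_def refl_on_def)
    ultimately show "f (h y) = y" using fC[OF C] x by simp
  qed
  then show ?thesis unfolding homeomorphic_space_def by blast
qed

lemma open_vimage_UNIV: "continuous_on UNIV f \<Longrightarrow> open B \<Longrightarrow> open (f -` B)"
  using continuous_on_open_vimage[OF open_UNIV, of f] by auto

lemma stratum_sat:
  fixes \<Psi> \<Phi>' :: "(complex^'n \<Rightarrow> complex) set" and V :: "(complex^'n) set"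
  defines "S \<equiv> stratum V \<Psi> \<Phi>'"
  assumes g: "good cor \<Psi>" and fin: "finite \<Psi>"
    and clos: "\<forall>a\<in>\<Psi>. \<forall>b\<in>\<Psi>. drefl cor a b \<in> \<Psi>"
    and sub: "\<Phi>' \<subseteq> \<Psi>"
    and inv: "\<And>w x. w \<in> weyl_group cor \<Psi> \<Longrightarrow> x \<in> V \<Longrightarrow> w x \<in> V"
    and V0: "openin (top_of_set S) V0"
  shows "openin (top_of_set S) {y. \<exists>x\<in>V0. (x, y) \<in> orbit_rel (weyl_group cor \<Psi>) S}"
proof -
  let ?W = "weyl_group cor \<Psi>"
  let ?Sat = "{y. \<exists>x\<in>V0. (x, y) \<in> orbit_rel ?W S}"
  obtain Op where Op: "open Op" "V0 = S \<inter> Op" using V0 by (auto simp: openin_open)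
  have lin: "clinear_fun a" if "a \<in> \<Psi>" for a using g that unfolding good_def by blast
  show ?thesis
  proof (subst openin_subopen, intro ballI)
    fix y assume "y \<in> ?Sat"
    then obtain x where x: "x \<in> V0" "(x, y) \<in> orbit_rel ?W S" by blast
    then have yS: "y \<in> S" and xS: "x \<in> S" unfolding orbit_rel_def by auto
    from x(2) obtain w where w: "w \<in> ?W" "x = w y"
      unfolding orbit_rel_def using weyl_orbit[OF g, of y x] by auto
    define G where "G = (w -` Op) \<inter> (\<Inter>a\<in>\<Psi> - \<Phi>'. (a \<circ> w) -` (- {0}))"
    have cw: "continuous_on UNIV w" using weyl_cont[OF w(1) g] .
    have "open G" unfolding G_def
    proof (intro open_Int open_INT)
      show "open (w -` Op)" using Op(1) cw by (simp add: open_vimage_UNIV)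
      show "finite (\<Psi> - \<Phi>')" using fin by simp
      show "\<forall>a\<in>\<Psi> - \<Phi>'. open ((a \<circ> w) -` (- {0}))"
      proof
      fix a assume "a \<in> \<Psi> - \<Phi>'"
      then have "continuous_on UNIV (a \<circ> w)"
        using continuous_on_compose[OF cw, of a] clinear_cont[of a "w ` UNIV"] lin by auto
      then show "open ((a \<circ> w) -` (- {0}))" by (intro open_vimage_UNIV) (auto simp: o_def)
      qed
    qed
    moreover have "y \<in> S \<inter> G"
      using yS xS x(1) Op(2) w(2) unfolding G_def S_def stratum_def by auto
    moreover have "S \<inter> G \<subseteq> ?Sat"
    proof
      fix y' assume y': "y' \<in> S \<inter> G"
      have wS: "w y' \<in> S"
        unfolding S_def stratum_def
      proof (intro CollectI conjI ballI)
        show "w y' \<in> V" using y' inv[OF w(1)] unfolding S_def stratum_def by auto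
        fix a assume a: "a \<in> \<Phi>'"
        have aw: "a \<circ> w \<in> \<Psi>" using weyl_dual[OF w(1) g clos] a sub by blast
        have "(a \<circ> w) y = 0" using xS a w(2) unfolding S_def stratum_def by auto
        moreover have "\<forall>b\<in>\<Psi> - \<Phi>'. b y \<noteq> 0" using yS unfolding S_def stratum_def by blast
        ultimately have "a \<circ> w \<in> \<Phi>'" using aw by (metis DiffI comp_apply)
        then show "a (w y') = 0" using y' unfolding S_def stratum_def by auto
      next
        fix a assume "a \<in> \<Psi> - \<Phi>'"
        then show "a (w y') \<noteq> 0" using y' unfolding G_def by auto
      qed
      have "w y' \<in> V0" using wS y' Op(2) unfolding G_def by auto
      moreover have "(w y', y') \<in> orbit_rel ?W S"
        unfolding orbit_rel_def using wS y' weyl_orbit[OF g, of y' "w y'"] w(1) by auto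
      ultimately show "y' \<in> ?Sat" by blast
    qed
    moreover have "openin (top_of_set S) (S \<inter> G)" using \<open>open G\<close> by (auto simp: openin_open)
    ultimately show "\<exists>T. openin (top_of_set S) T \<and> y \<in> T \<and> T \<subseteq> ?Sat" by blast
  qed
qed

locale cartan =
  fixes I :: "'i set"
    and T :: "'i \<Rightarrow> (complex^'n) set"
    and Phi :: "'i \<Rightarrow> (complex^'n \<Rightarrow> complex) set"
    and cor :: "(complex^'n \<Rightarrow> complex) \<Rightarrow> complex^'n"
    and \<Phi> :: "(complex^'n \<Rightarrow> complex) set"
  assumes dsum: "internal_direct_sum I T"
    and roots: "\<And>i. i \<in> I \<Longrightarrow> root_system_in (T i) (Phi i) cor"
    and vanish: "\<And>i j a x. i \<in> I \<Longrightarrow> j \<in> I \<Longrightarrow> j \<noteq> i \<Longrightarrow> a \<in> Phi i \<Longrightarrow> x \<in> T j \<Longrightarrow> a x = 0"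
    and sub: "root_subsystem cor \<Phi> (\<Union>i\<in>I. Phi i)"
begin

definition dec :: "complex^'n \<Rightarrow> 'i \<Rightarrow> complex^'n" where
  "dec x = (THE y. y \<in> (\<Pi>\<^sub>E i\<in>I. T i) \<and> x = (\<Sum>i\<in>I. y i))"

definition p :: "'i \<Rightarrow> complex^'n \<Rightarrow> complex^'n" where
  "p i x = dec x i"

lemma finI: "finite I" using dsum unfolding internal_direct_sum_def by blast

lemma subsp: "i \<in> I \<Longrightarrow> csubspace_vec (T i)" using dsum unfolding internal_direct_sum_def by blast

lemma T0: "i \<in> I \<Longrightarrow> 0 \<in> T i" using subsp unfolding csubspace_vec_def by blast
lemma Tadd: "i \<in> I \<Longrightarrow> x \<in> T i \<Longrightarrow> y \<in> T i \<Longrightarrow> x + y \<in> T i" using subsp unfolding csubspace_vec_def by blast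
lemma Tscale: "i \<in> I \<Longrightarrow> x \<in> T i \<Longrightarrow> c *s x \<in> T i" using subsp unfolding csubspace_vec_def by blast
lemma Tdiff: "i \<in> I \<Longrightarrow> x \<in> T i \<Longrightarrow> y \<in> T i \<Longrightarrow> x - y \<in> T i"
proof -
  assume "i \<in> I" "x \<in> T i" "y \<in> T i"
  then have "x + (-1) *s y \<in> T i" by (intro Tadd Tscale)
  moreover have "x + (-1) *s y = x - y" by (simp add: vec_eq_iff)
  ultimately show ?thesis by simp
qed

lemma dec: "dec x \<in> (\<Pi>\<^sub>E i\<in>I. T i) \<and> x = (\<Sum>i\<in>I. dec x i)"
proof -
  have "\<exists>!y. y \<in> (\<Pi>\<^sub>E i\<in>I. T i) \<and> x = (\<Sum>i\<in>I. y i)"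
    using dsum unfolding internal_direct_sum_def by blast
  from theI'[OF this] show ?thesis unfolding dec_def .
qed

lemma dec_unique: "y \<in> (\<Pi>\<^sub>E i\<in>I. T i) \<Longrightarrow> dec (\<Sum>i\<in>I. y i) = y"
  unfolding dec_def using dsum unfolding internal_direct_sum_def by (intro the1_equality) blast+

lemma p_sum: "(\<And>j. j \<in> I \<Longrightarrow> z j \<in> T j) \<Longrightarrow> i \<in> I \<Longrightarrow> p i (\<Sum>j\<in>I. z j) = z i"
proof -
  assume z: "\<And>j. j \<in> I \<Longrightarrow> z j \<in> T j" and i: "i \<in> I"
  have "restrict z I \<in> (\<Pi>\<^sub>E i\<in>I. T i)" using z by auto
  moreover have "(\<Sum>j\<in>I. restrict z I j) = (\<Sum>j\<in>I. z j)" by simp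
  ultimately have "dec (\<Sum>j\<in>I. z j) = restrict z I" using dec_unique by metis
  then show ?thesis using i unfolding p_def by simp
qed

lemma p_T: "i \<in> I \<Longrightarrow> p i x \<in> T i" using dec[of x] unfolding p_def by auto

lemma p_recon: "x = (\<Sum>i\<in>I. p i x)" using dec[of x] unfolding p_def by auto

lemma p_eq: "(\<And>i. i \<in> I \<Longrightarrow> p i x = p i y) \<Longrightarrow> x = y"
  using p_recon[of x] p_recon[of y] by (metis (mono_tags, lifting) sum.cong)

lemma p_add: "i \<in> I \<Longrightarrow> p i (x + y) = p i x + p i y"
proof -
  assume i: "i \<in> I"
  have "x + y = (\<Sum>j\<in>I. p j x + p j y)" using p_recon[of x] p_recon[of y] by (simp add: sum.distrib)
  then show ?thesis using p_sum[of "\<lambda>j. p j x + p j y" i] i p_T Tadd by auto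
qed

lemma p_scale: "i \<in> I \<Longrightarrow> p i (c *s x) = c *s p i x"
proof -
  assume i: "i \<in> I"
  have "c *s x = (\<Sum>j\<in>I. c *s p j x)" using p_recon[of x] by (simp add: sum_cmul)
  then show ?thesis using p_sum[of "\<lambda>j. c *s p j x" i] i p_T Tscale by auto
qed

lemma p_diff: "i \<in> I \<Longrightarrow> p i (x - y) = p i x - p i y"
  using p_add[of i "x - y" y] by simp

lemma p_in: "k \<in> I \<Longrightarrow> x \<in> T k \<Longrightarrow> i \<in> I \<Longrightarrow> p i x = (if i = k then x else 0)"
proof -
  assume k: "k \<in> I" and x: "x \<in> T k" and i: "i \<in> I"
  have "x = (\<Sum>j\<in>I. if j = k then x else 0)" using k finI by simp
  then show ?thesis using p_sum[of "\<lambda>j. if j = k then x else 0" i] i x T0 by auto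
qed

lemma p_linear: "i \<in> I \<Longrightarrow> linear (p i)"
  by (rule linearI) (auto simp: p_add p_scale scaleR_vec_of_real)

lemma p_cont: "i \<in> I \<Longrightarrow> continuous_on S (p i)"
  using p_linear[of i] linear_conv_bounded_linear[of "p i"] linear_continuous_on[of "p i" S] by blast

lemma root_props: "k \<in> I \<Longrightarrow> a \<in> Phi k \<Longrightarrow> clinear_fun a \<and> cor a \<in> T k \<and> a (cor a) = 2 \<and>
   (\<forall>b\<in>Phi k. drefl cor a b \<in> Phi k)"
  using roots[of k] unfolding root_system_in_def by blast

lemma root_p: "k \<in> I \<Longrightarrow> a \<in> Phi k \<Longrightarrow> a x = a (p k x)"
proof -
  assume k: "k \<in> I" and a: "a \<in> Phi k"
  have lin: "clinear_fun a" using root_props[OF k a] by blast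
  have "a x = (\<Sum>j\<in>I. a (p j x))" using clinear_sum[OF lin, of "\<lambda>j. p j x" I] p_recon[of x] by simp
  also have "\<dots> = a (p k x) + (\<Sum>j\<in>I - {k}. a (p j x))" using k finI by (simp add: sum.remove)
  also have "(\<Sum>j\<in>I - {k}. a (p j x)) = 0" using vanish[OF k _ _ a] p_T by (intro sum.neutral) auto
  finally show ?thesis by simp
qed

lemma good_i: "i \<in> I \<Longrightarrow> good cor (Phi i)" using root_props unfolding good_def by blast

lemma good_all: "good cor (\<Union>i\<in>I. Phi i)" using root_props unfolding good_def by blast

lemma fin_i: "i \<in> I \<Longrightarrow> finite (Phi i)" using roots unfolding root_system_in_def by blast

lemma fin_all: "finite (\<Union>i\<in>I. Phi i)" using fin_i finI by blast

lemma refl_p: "k \<in> I \<Longrightarrow> a \<in> Phi k \<Longrightarrow> i \<in> I \<Longrightarrow>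
    p i (refl cor a Z) = (if i = k then refl cor a (p k Z) else p i Z)"
proof -
  assume k: "k \<in> I" and a: "a \<in> Phi k" and i: "i \<in> I"
  have c: "cor a \<in> T k" using root_props[OF k a] by blast
  have "p i (refl cor a Z) = p i Z - a Z *s p i (cor a)" unfolding refl_def using i by (simp add: p_diff p_scale)
  then show ?thesis using p_in[OF k c i] root_p[OF k a, of Z] unfolding refl_def by auto
qed

lemma Wk_p: "w \<in> weyl_group cor (Phi k) \<Longrightarrow> k \<in> I \<Longrightarrow> i \<in> I \<Longrightarrow>
    p i (w Z) = (if i = k then w (p k Z) else p i Z)"
proof (induction w arbitrary: Z i rule: weyl_group.induct)
  case weyl_id
  then show ?case by simp
next
  case (weyl_step a w)
  have k: "k \<in> I" and i: "i \<in> I" using weyl_step.prems by auto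
  show ?case using refl_p[OF k weyl_step(1) i, of "w Z"] weyl_step.IH[OF k i] weyl_step.IH[OF k k] by simp
qed

lemma Wk_T: "w \<in> weyl_group cor (Phi k) \<Longrightarrow> k \<in> I \<Longrightarrow> x \<in> T k \<Longrightarrow> w x \<in> T k"
proof (induction w rule: weyl_group.induct)
  case weyl_id
  then show ?case by simp
next
  case (weyl_step a w)
  then have "w x \<in> T k" by blast
  moreover have "cor a \<in> T k" using root_props weyl_step by blast
  ultimately show ?case unfolding refl_def using weyl_step.prems by (auto intro: Tdiff Tscale)
qed

lemma W_dec: "w \<in> weyl_group cor (\<Union>i\<in>I. Phi i) \<Longrightarrow>
   \<exists>ws. (\<forall>i\<in>I. ws i \<in> weyl_group cor (Phi i)) \<and> (\<forall>i\<in>I. \<forall>Z. p i (w Z) = ws i (p i Z))"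
proof (induction w rule: weyl_group.induct)
  case weyl_id
  have "\<forall>i\<in>I. id \<in> weyl_group cor (Phi i)" by (simp add: weyl_group.weyl_id)
  then show ?case by (intro exI[of _ "\<lambda>i. id"]) (simp add: id_def)
next
  case (weyl_step a w)
  then obtain k where k: "k \<in> I" "a \<in> Phi k" by blast
  from weyl_step obtain ws where ws: "\<forall>i\<in>I. ws i \<in> weyl_group cor (Phi i)"
    "\<forall>i\<in>I. \<forall>Z. p i (w Z) = ws i (p i Z)" by blast
  let ?ws = "ws(k := refl cor a \<circ> ws k)"
  have "\<forall>i\<in>I. ?ws i \<in> weyl_group cor (Phi i)" using ws k by (auto intro: weyl_group.weyl_step)
  moreover have "\<forall>i\<in>I. \<forall>Z. p i ((refl cor a \<circ> w) Z) = ?ws i (p i Z)"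
  proof (intro ballI allI)
    fix i Z assume i: "i \<in> I"
    have e: "p i (refl cor a (w Z)) = (if i = k then refl cor a (p k (w Z)) else p i (w Z))"
      by (rule refl_p[OF k i])
    show "p i ((refl cor a \<circ> w) Z) = ?ws i (p i Z)"
    proof (cases "i = k")
      case True
      then show ?thesis using e ws(2) k by simp
    next
      case False
      then show ?thesis using e ws(2) i by simp
    qed
  qed
  ultimately show ?case by blast
qed

lemma W_comp_aux: "finite J \<Longrightarrow> J \<subseteq> I \<Longrightarrow> (\<forall>i\<in>I. ws i \<in> weyl_group cor (Phi i)) \<Longrightarrow>
   \<exists>w\<in>weyl_group cor (\<Union>i\<in>I. Phi i). \<forall>i\<in>I. \<forall>Z. p i (w Z) = (if i \<in> J then ws i (p i Z) else p i Z)"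
proof (induction J rule: finite_induct)
  case empty
  then show ?case using weyl_group.weyl_id[of cor "\<Union>i\<in>I. Phi i"] by (intro bexI[of _ id]) (simp_all add: id_def)
next
  case (insert k J)
  then obtain w where w: "w \<in> weyl_group cor (\<Union>i\<in>I. Phi i)"
    "\<forall>i\<in>I. \<forall>Z. p i (w Z) = (if i \<in> J then ws i (p i Z) else p i Z)" by auto
  have k: "k \<in> I" using insert by blast
  have wk: "ws k \<in> weyl_group cor (\<Union>i\<in>I. Phi i)"
    using insert(5) k weyl_sub[of "ws k" cor "Phi k" "\<Union>i\<in>I. Phi i"] by blast
  have "ws k \<circ> w \<in> weyl_group cor (\<Union>i\<in>I. Phi i)" using weyl_comp[OF wk w(1)] .
  moreover have "\<forall>i\<in>I. \<forall>Z. p i ((ws k \<circ> w) Z) = (if i \<in> insert k J then ws i (p i Z) else p i Z)"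
  proof (intro ballI allI)
    fix i Z assume i: "i \<in> I"
    have e: "p i (ws k (w Z)) = (if i = k then ws k (p k (w Z)) else p i (w Z))"
      using Wk_p[of "ws k" k i "w Z"] insert(5) k i by blast
    show "p i ((ws k \<circ> w) Z) = (if i \<in> insert k J then ws i (p i Z) else p i Z)"
    proof (cases "i = k")
      case True
      then show ?thesis using e w(2) k insert(2) by simp
    next
      case False
      then show ?thesis using e w(2) i by simp
    qed
  qed
  ultimately show ?case by blast
qed

lemma W_comp: "(\<forall>i\<in>I. ws i \<in> weyl_group cor (Phi i)) \<Longrightarrow>
   \<exists>w\<in>weyl_group cor (\<Union>i\<in>I. Phi i). \<forall>i\<in>I. \<forall>Z. p i (w Z) = ws i (p i Z)"
  using W_comp_aux[OF finI order_refl] by auto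

end

context cartan begin

abbreviation "Phig \<equiv> \<Union>i\<in>I. Phi i"
abbreviation "BB \<equiv> stratum UNIV Phig \<Phi>"
abbreviation "Bi i \<equiv> stratum (T i) (Phi i) (\<Phi> \<inter> Phi i)"
abbreviation "RR \<equiv> orbit_rel (weyl_group cor Phig) BB"
abbreviation "Ri i \<equiv> orbit_rel (weyl_group cor (Phi i)) (Bi i)"
abbreviation "Q i \<equiv> quot_topology (top_of_set (Bi i)) (Ri i)"

lemma subPhi: "\<Phi> \<subseteq> Phig" using sub unfolding root_subsystem_def by blast

lemma B_char: "X \<in> BB \<longleftrightarrow> (\<forall>i\<in>I. p i X \<in> Bi i)"
proof
  assume X: "X \<in> BB"
  show "\<forall>i\<in>I. p i X \<in> Bi i"
  proof
    fix i assume i: "i \<in> I"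
    have "\<forall>a\<in>\<Phi> \<inter> Phi i. a (p i X) = 0"
    proof
      fix a assume a: "a \<in> \<Phi> \<inter> Phi i"
      then have "a X = 0" using X unfolding stratum_def by blast
      then show "a (p i X) = 0" using root_p[OF i, of a X] a by simp
    qed
    moreover have "\<forall>a\<in>Phi i - \<Phi> \<inter> Phi i. a (p i X) \<noteq> 0"
    proof
      fix a assume a: "a \<in> Phi i - \<Phi> \<inter> Phi i"
      then have "a \<in> Phig - \<Phi>" using i by blast
      then have "a X \<noteq> 0" using X unfolding stratum_def by blast
      then show "a (p i X) \<noteq> 0" using root_p[OF i, of a X] a by simp
    qed
    ultimately show "p i X \<in> Bi i" using p_T[OF i] unfolding stratum_def by blast
  qed
next
  assume H: "\<forall>i\<in>I. p i X \<in> Bi i"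
  have "\<forall>a\<in>\<Phi>. a X = 0"
  proof
    fix a assume a: "a \<in> \<Phi>"
    then obtain i where i: "i \<in> I" "a \<in> Phi i" using subPhi by blast
    then have "a (p i X) = 0" using H a unfolding stratum_def by blast
    then show "a X = 0" using root_p[OF i(1) i(2), of X] by simp
  qed
  moreover have "\<forall>a\<in>Phig - \<Phi>. a X \<noteq> 0"
  proof
    fix a assume a: "a \<in> Phig - \<Phi>"
    then obtain i where i: "i \<in> I" "a \<in> Phi i" by blast
    then have "a (p i X) \<noteq> 0" using H a unfolding stratum_def by blast
    then show "a X \<noteq> 0" using root_p[OF i(1) i(2), of X] by simp
  qed
  ultimately show "X \<in> BB" unfolding stratum_def by blast
qed

lemma Bi_T: "i \<in> I \<Longrightarrow> z \<in> Bi i \<Longrightarrow> z \<in> T i" unfolding stratum_def by auto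

lemma rel_char:
  assumes X: "X \<in> BB" and Y: "Y \<in> BB"
  shows "(X, Y) \<in> RR \<longleftrightarrow> (\<forall>i\<in>I. (p i X, p i Y) \<in> Ri i)"
proof -
  have R0: "(A, C) \<in> orbit_rel W S \<longleftrightarrow> (\<lambda>w. w A) ` W = (\<lambda>w. w C) ` W"
    if "A \<in> S" "C \<in> S" for A C :: "complex^'n" and W S
    using that unfolding orbit_rel_def by simp
  have R1: "(X, Y) \<in> RR \<longleftrightarrow> (\<exists>w\<in>weyl_group cor Phig. Y = w X)"
    using R0[OF X Y] weyl_orbit[OF good_all, of X Y] by simp
  have R2: "(p i X, p i Y) \<in> Ri i \<longleftrightarrow> (\<exists>w\<in>weyl_group cor (Phi i). p i Y = w (p i X))" if i: "i \<in> I" for i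
  proof -
    have "p i X \<in> Bi i" "p i Y \<in> Bi i" using X Y B_char i by blast+
    then show ?thesis using R0 weyl_orbit[OF good_i[OF i], of "p i X" "p i Y"] by simp
  qed
  show ?thesis
  proof
    assume "(X, Y) \<in> RR"
    then obtain w where w: "w \<in> weyl_group cor Phig" "Y = w X" using R1 by blast
    obtain ws where ws: "\<forall>i\<in>I. ws i \<in> weyl_group cor (Phi i)" "\<forall>i\<in>I. \<forall>Z. p i (w Z) = ws i (p i Z)"
      using W_dec[OF w(1)] by blast
    show "\<forall>i\<in>I. (p i X, p i Y) \<in> Ri i"
    proof
      fix i assume i: "i \<in> I"
      have "p i Y = ws i (p i X)" using ws(2) i w(2) by simp
      then show "(p i X, p i Y) \<in> Ri i" using R2[OF i] ws(1) i by blast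
    qed
  next
    assume "\<forall>i\<in>I. (p i X, p i Y) \<in> Ri i"
    then have "\<forall>i\<in>I. \<exists>w. w \<in> weyl_group cor (Phi i) \<and> p i Y = w (p i X)" using R2 by blast
    then obtain ws where ws: "\<forall>i\<in>I. ws i \<in> weyl_group cor (Phi i) \<and> p i Y = ws i (p i X)"
      by (metis bchoice)
    obtain w where w: "w \<in> weyl_group cor Phig" "\<forall>i\<in>I. \<forall>Z. p i (w Z) = ws i (p i Z)"
      using W_comp[of ws] ws by blast
    have "w X = Y"
    proof (rule p_eq)
      fix i assume i: "i \<in> I"
      show "p i (w X) = p i Y" using w(2) ws i by simp
    qed
    then show "(X, Y) \<in> RR" using R1 w(1) by blast
  qed
qed

lemma equivB: "equiv (topspace (top_of_set BB)) RR" using orbit_rel_equiv by simp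
lemma equivBi: "equiv (topspace (top_of_set (Bi i))) (Ri i)" using orbit_rel_equiv by simp
lemma equivBi': "equiv (Bi i) (Ri i)" by (rule orbit_rel_equiv)

lemma topQ: "topspace (Q i) = Bi i // Ri i"
  using topspace_quot[OF equivBi] by simp

lemma Q_open:
  assumes i: "i \<in> I" and V: "openin (top_of_set (Bi i)) V"
  shows "openin (Q i) ((\<lambda>z. Ri i `` {z}) ` V)"
proof (rule quot_open[OF equivBi _ V])
  fix V0 assume V0: "openin (top_of_set (Bi i)) V0"
  show "openin (top_of_set (Bi i)) {y. \<exists>x\<in>V0. (x, y) \<in> Ri i}"
  proof (rule stratum_sat[OF good_i[OF i] fin_i[OF i]])
    show "\<forall>a\<in>Phi i. \<forall>b\<in>Phi i. drefl cor a b \<in> Phi i" using root_props[OF i] by blast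
    show "\<Phi> \<inter> Phi i \<subseteq> Phi i" by blast
    show "\<And>w x. w \<in> weyl_group cor (Phi i) \<Longrightarrow> x \<in> T i \<Longrightarrow> w x \<in> T i" using Wk_T i by blast
  qed (rule V0)
qed

lemma p_cont_B: "i \<in> I \<Longrightarrow> continuous_map (top_of_set BB) (top_of_set (Bi i)) (p i)"
  by (auto simp: continuous_map_in_subtopology p_cont B_char)

definition gmap :: "complex^'n \<Rightarrow> 'i \<Rightarrow> (complex^'n) set" where
  "gmap X = (\<lambda>i\<in>I. Ri i `` {p i X})"

lemma main: "quot_topology (top_of_set BB) RR homeomorphic_space product_topology Q I"
proof (rule quot_homeo[OF equivB, of _ gmap])
  show "continuous_map (top_of_set BB) (product_topology Q I) gmap"
    unfolding continuous_map_componentwise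
  proof (intro conjI ballI)
    show "gmap ` topspace (top_of_set BB) \<subseteq> extensional I" unfolding gmap_def by auto
    fix k assume k: "k \<in> I"
    have "continuous_map (top_of_set BB) (Q k) ((\<lambda>z. Ri k `` {z}) \<circ> p k)"
      using continuous_map_compose[OF p_cont_B[OF k] quot_cont[OF equivBi]] by simp
    moreover have "(\<lambda>x. gmap x k) = (\<lambda>z. Ri k `` {z}) \<circ> p k" using k unfolding gmap_def by auto
    ultimately show "continuous_map (top_of_set BB) (Q k) (\<lambda>x. gmap x k)" by simp
  qed
next
  show "gmap ` topspace (top_of_set BB) = topspace (product_topology Q I)"
  proof
    show "gmap ` topspace (top_of_set BB) \<subseteq> topspace (product_topology Q I)"
    proof
      fix y assume "y \<in> gmap ` topspace (top_of_set BB)"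
      then obtain X where X: "X \<in> BB" "y = gmap X" by (auto simp del: stratum_def)
      have "\<forall>i\<in>I. Ri i `` {p i X} \<in> Bi i // Ri i"
      proof
        fix i assume i: "i \<in> I"
        have "p i X \<in> Bi i" using X(1) B_char i by blast
        then show "Ri i `` {p i X} \<in> Bi i // Ri i" by (rule quotientI)
      qed
      then show "y \<in> topspace (product_topology Q I)"
        unfolding topspace_product_topology topQ X(2) gmap_def by auto
    qed
    show "topspace (product_topology Q I) \<subseteq> gmap ` topspace (top_of_set BB)"
    proof
      fix y assume "y \<in> topspace (product_topology Q I)"
      then have y: "y \<in> (\<Pi>\<^sub>E i\<in>I. Bi i // Ri i)" unfolding topspace_product_topology topQ .
      have "\<forall>i\<in>I. \<exists>z. z \<in> Bi i \<and> y i = Ri i `` {z}"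
      proof
        fix i assume i: "i \<in> I"
        then have "y i \<in> Bi i // Ri i" using y by (simp add: PiE_iff)
        then obtain z where "z \<in> Bi i" "y i = Ri i `` {z}" by (rule quotientE)
        then show "\<exists>z. z \<in> Bi i \<and> y i = Ri i `` {z}" by blast
      qed
      from bchoice[OF this] obtain zf where zf: "\<forall>i\<in>I. zf i \<in> Bi i \<and> y i = Ri i `` {zf i}" by blast
      define Z where "Z = (\<Sum>j\<in>I. zf j)"
      have pZ: "i \<in> I \<Longrightarrow> p i Z = zf i" for i unfolding Z_def
        by (rule p_sum) (use zf Bi_T in blast)+
      have "\<forall>i\<in>I. p i Z \<in> Bi i" using pZ zf by simp
      then have "Z \<in> BB" using B_char by blast
      moreover have "gmap Z = y"
      proof
        fix i show "gmap Z i = y i"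
        proof (cases "i \<in> I")
          case True
          have "gmap Z i = Ri i `` {p i Z}" unfolding gmap_def using True by simp
          also have "\<dots> = Ri i `` {zf i}" using pZ[OF True] by simp
          also have "\<dots> = y i" using zf True by simp
          finally show ?thesis .
        next
          case False
          have "gmap Z i = undefined" unfolding gmap_def using False by simp
          then show ?thesis using PiE_arb[OF y False] by simp
        qed
      qed
      ultimately show "y \<in> gmap ` topspace (top_of_set BB)" by auto
    qed
  qed
next
  fix X Y assume "X \<in> topspace (top_of_set BB)" "Y \<in> topspace (top_of_set BB)"
  then have X: "X \<in> BB" and Y: "Y \<in> BB" by auto
  have "gmap X = gmap Y \<longleftrightarrow> (\<forall>i\<in>I. Ri i `` {p i X} = Ri i `` {p i Y})"
    unfolding gmap_def fun_eq_iff by (auto split: if_splits)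
  also have "\<dots> \<longleftrightarrow> (\<forall>i\<in>I. (p i X, p i Y) \<in> Ri i)"
  proof -
    have "\<forall>i\<in>I. p i X \<in> Bi i" "\<forall>i\<in>I. p i Y \<in> Bi i" using X Y B_char by blast+
    then show ?thesis using eq_equiv_class_iff[OF equivBi'] by simp
  qed
  also have "\<dots> \<longleftrightarrow> (X, Y) \<in> RR" using rel_char[OF X Y] by simp
  finally show "gmap X = gmap Y \<longleftrightarrow> (X, Y) \<in> RR" .
next
  fix U assume U: "openin (top_of_set BB) U"
  then obtain Op where Op: "open Op" "U = BB \<inter> Op" by (auto simp: openin_open)
  show "openin (product_topology Q I) (gmap ` U)"
    unfolding openin_product_topology_alt
  proof
    fix y assume "y \<in> gmap ` U"
    then obtain X where X: "X \<in> U" "y = gmap X" by blast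
    obtain e where e: "e > 0" "ball X e \<subseteq> Op" using Op X open_contains_ball by blast
    define d where "d = e / (card I + 1)"
    have d: "d > 0" using e unfolding d_def by simp
    have cd: "card I * d < e" using e unfolding d_def by (simp add: field_simps)
    define V where "V i = (\<lambda>z. Ri i `` {z}) ` (Bi i \<inter> ball (p i X) d)" for i
    have XB: "X \<in> BB" using X Op by auto
    have "finite {i \<in> I. V i \<noteq> topspace (Q i)}" using finI by simp
    moreover have "\<forall>i\<in>I. openin (Q i) (V i)"
    proof
      fix i assume i: "i \<in> I"
      have "openin (top_of_set (Bi i)) (Bi i \<inter> ball (p i X) d)"
        using openin_open_Int[of "ball (p i X) d" "Bi i"] by (simp add: Int_commute)
      then show "openin (Q i) (V i)" unfolding V_def by (rule Q_open[OF i])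
    qed
    moreover have "y \<in> Pi\<^sub>E I V"
    proof -
      have "\<forall>i\<in>I. p i X \<in> Bi i" using XB B_char by blast
      then have "\<forall>i\<in>I. Ri i `` {p i X} \<in> V i" unfolding V_def using d by auto
      then show ?thesis unfolding X(2) gmap_def by (simp add: PiE_iff)
    qed
    moreover have "Pi\<^sub>E I V \<subseteq> gmap ` U"
    proof
      fix y' assume y': "y' \<in> Pi\<^sub>E I V"
      have "\<forall>i\<in>I. \<exists>z. z \<in> Bi i \<inter> ball (p i X) d \<and> y' i = Ri i `` {z}"
      proof
        fix i assume i: "i \<in> I"
        then have "y' i \<in> V i" using y' by (simp add: PiE_iff)
        then obtain z where "z \<in> Bi i \<inter> ball (p i X) d" "y' i = Ri i `` {z}"
          unfolding V_def by blast
        then show "\<exists>z. z \<in> Bi i \<inter> ball (p i X) d \<and> y' i = Ri i `` {z}" by blast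
      qed
      from bchoice[OF this] obtain zf where zf: "\<forall>i\<in>I. zf i \<in> Bi i \<inter> ball (p i X) d \<and> y' i = Ri i `` {zf i}"
        by blast
      define Z where "Z = (\<Sum>j\<in>I. zf j)"
      have pZ: "i \<in> I \<Longrightarrow> p i Z = zf i" for i unfolding Z_def
        by (rule p_sum) (use zf Bi_T in blast)+
      have "\<forall>i\<in>I. p i Z \<in> Bi i" using pZ zf by simp
      then have ZB: "Z \<in> BB" using B_char by blast
      have "X - Z = (\<Sum>j\<in>I. p j X - zf j)"
        using p_recon[of X] unfolding Z_def by (simp add: sum_subtractf)
      then have "norm (X - Z) \<le> (\<Sum>j\<in>I. norm (p j X - zf j))" by (simp add: norm_sum)
      also have "\<dots> \<le> (\<Sum>j\<in>I. d)"
        using zf by (intro sum_mono) (auto simp: dist_norm less_imp_le)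
      also have "\<dots> = card I * d" by simp
      finally have "dist X Z < e" using cd by (simp add: dist_norm)
      then have "Z \<in> Op" using e(2) by auto
      then have "Z \<in> U" using ZB Op(2) by blast
      moreover have "gmap Z = y'"
      proof
        fix i show "gmap Z i = y' i"
        proof (cases "i \<in> I")
          case True
          have "gmap Z i = Ri i `` {p i Z}" unfolding gmap_def using True by simp
          also have "\<dots> = Ri i `` {zf i}" using pZ[OF True] by simp
          also have "\<dots> = y' i" using zf True by simp
          finally show ?thesis .
        next
          case False
          have "gmap Z i = undefined" unfolding gmap_def using False by simp
          then show ?thesis using PiE_arb[OF y' False] by simp
        qed
      qed
      ultimately show "y' \<in> gmap ` U" by blast
    qed
    ultimately show "\<exists>V. finite {i \<in> I. V i \<noteq> topspace (Q i)} \<and> (\<forall>i\<in>I. openin (Q i) (V i)) \<and>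
         y \<in> Pi\<^sub>E I V \<and> Pi\<^sub>E I V \<subseteq> gmap ` U" by (intro exI[of _ V] conjI)
  qed
qed

end

theorem corollary3p1:
  fixes I :: "'i set"
    and T :: "'i \<Rightarrow> (complex^'n) set"
    and Phi :: "'i \<Rightarrow> (complex^'n \<Rightarrow> complex) set"
    and cor :: "(complex^'n \<Rightarrow> complex) \<Rightarrow> complex^'n"
    and \<Phi> :: "(complex^'n \<Rightarrow> complex) set"
  assumes dsum: "internal_direct_sum I T"
    and roots: "\<And>i. i \<in> I \<Longrightarrow> root_system_in (T i) (Phi i) cor"
    and vanish: "\<And>i j a x. i \<in> I \<Longrightarrow> j \<in> I \<Longrightarrow> j \<noteq> i \<Longrightarrow> a \<in> Phi i \<Longrightarrow> x \<in> T j \<Longrightarrow> a x = 0"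
    and disj: "disjoint_family_on Phi I"
    and sub: "root_subsystem cor \<Phi> (\<Union>i\<in>I. Phi i)"
  shows "quot_topology (subtopology euclidean (stratum UNIV (\<Union>i\<in>I. Phi i) \<Phi>))
           (orbit_rel (weyl_group cor (\<Union>i\<in>I. Phi i)) (stratum UNIV (\<Union>i\<in>I. Phi i) \<Phi>))
         homeomorphic_space
         product_topology
           (\<lambda>i. quot_topology (subtopology euclidean (stratum (T i) (Phi i) (\<Phi> \<inter> Phi i)))
                  (orbit_rel (weyl_group cor (Phi i)) (stratum (T i) (Phi i) (\<Phi> \<inter> Phi i)))) I"
proof -
  interpret cartan I T Phi cor \<Phi>
    by unfold_locales (use dsum roots vanish sub in auto)
  show ?thesis using main by simp
qed

end
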